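(* For all $x,y\in\mathbb{R}^k\setminus\{0\}$, $\|h_x-h_y\|\leqslant\Big(\frac{(2d^2+(10\pi+8)d+20\pi)\|x_*\|}{\pi^22^d}\max\big(\frac1{\|x\|},\frac1{\|y\|}\big)+\frac1{2^d}\Big)\|x-y\|$. In particular, if $x,y\notin\mathcal{B}(0,r\|x_*\|)$ for some $r>0$, then $\|h_x-h_y\|\leqslant\Big(\frac{2d^2+(10\pi+8)d+20\pi}{r\pi^22^d}+\frac1{2^d}\Big)\|x-y\|$.
   Context: Fix $x_*\in\mathbb{R}^k\setminus\{0\}$ and a positive integer $d$. Let $g(\theta)=\cos^{-1}\!\big(\frac{(\pi-\theta)\cos\theta+\sin\theta}{\pi}\big)$. For $x\neq0$, $\overline\theta_{0,x}=\angle(x,x_* )$, $\overline\theta_{i,x}=g(\overline\theta_{i-1,x})$ for $i\in[d]$, and $h_x:=-\frac{\|x_*\|}{2^d}\frac{\pi-2\overline\theta_{d,x}}{\pi}\Big(\prod_{i=0}^{d-1}\frac{\pi-\overline\theta_{i,x}}{\pi}\Big)\hat x_*+\frac1{2^d}\Big[\|x\|-\|x_*\|\Big(\frac{2\sin\overline\theta_{d,x}}{\pi}+\frac{\pi-2\overline\theta_{d,x}}{\pi}\sum_{i=0}^{d-1}\frac{\sin\overline\theta_{i,x}}{\pi}\prod_{j=i+1}^{d-1}\frac{\pi-\overline\theta_{j,x}}{\pi}\Big)\Big]\hat x$, $\hat x=x/\|x\|$. $\mathcal{B}(0,r)$ is the closed ball. *)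

theory Defs
  imports "HOL-Analysis.Analysis"
begin

definition vec_angle :: "'a::real_inner \<Rightarrow> 'a \<Rightarrow> real" where
  "vec_angle x y = arccos ((x \<bullet> y) / (norm x * norm y))"

definition gmap :: "real \<Rightarrow> real" where
  "gmap \<theta> = arccos (((pi - \<theta>) * cos \<theta> + sin \<theta>) / pi)"

fun theta_bar :: "'a::real_inner \<Rightarrow> nat \<Rightarrow> 'a \<Rightarrow> real" where
  "theta_bar xs 0 x = vec_angle x xs"
| "theta_bar xs (Suc i) x = gmap (theta_bar xs i x)"

definition h_vec :: "'a::real_inner \<Rightarrow> nat \<Rightarrow> 'a \<Rightarrow> 'a" where
  "h_vec xs d x =
     ((- norm xs / 2 ^ d) * ((pi - 2 * theta_bar xs d x) / pi)
        * (\<Prod>i=0..<d. (pi - theta_bar xs i x) / pi)) *\<^sub>R sgn xs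
   + ((1 / 2 ^ d) * (norm x - norm xs *
        (2 * sin (theta_bar xs d x) / pi
         + ((pi - 2 * theta_bar xs d x) / pi)
           * (\<Sum>i=0..<d. (sin (theta_bar xs i x) / pi)
                * (\<Prod>j=Suc i..<d. (pi - theta_bar xs j x) / pi))))) *\<^sub>R sgn x"

end

theory Submission
  imports Defs
begin

lemma psi_le:
  fixes t :: real
  assumes "0 \<le> t" "t \<le> pi"
  shows "(pi-t)^2 + 2*(pi-t) * sin t * cos t + (sin t)^2 \<le> pi^2"
proof -
  let ?f = "\<lambda>t::real. (pi-t)^2 + 2*(pi-t) * sin t * cos t + (sin t)^2"
  have "?f t \<le> ?f 0"
  proof (rule DERIV_nonpos_imp_nonincreasing[OF assms(1)])
    fix x assume x: "0 \<le> x" "x \<le> t"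
    have "DERIV ?f x :> (-4*(pi-x)*(sin x)^2)"
    proof -
      have "DERIV ?f x :> (2 * (pi - x) * -1 + (2 * -1 * sin x * cos x + 2*(pi-x) * cos x * cos x + 2*(pi-x) * sin x * - sin x) + 2 * sin x * cos x)"
        by (rule derivative_eq_intros refl | simp add: algebra_simps)+
      moreover have "(2 * (pi - x) * -1 + (2 * -1 * sin x * cos x + 2*(pi-x) * cos x * cos x + 2*(pi-x) * sin x * - sin x) + 2 * sin x * cos x) = -4*(pi-x)*(sin x)^2"
        using sin_cos_squared_add[of x] unfolding power2_eq_square by algebra
      ultimately show ?thesis by simp
    qed
    moreover have "-4*(pi-x)*(sin x)^2 \<le> 0" using x assms by (intro mult_nonpos_nonneg) auto
    ultimately show "\<exists>y. DERIV ?f x :> y \<and> y \<le> 0" by blast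
  qed
  then show ?thesis by simp
qed

definition fexp :: "real \<Rightarrow> real" where
  "fexp t = ((pi - t) * cos t + sin t) / pi"

lemma gmap_fexp: "gmap t = arccos (fexp t)"
  by (simp add: gmap_def fexp_def)

lemma fexp_bounds:
  assumes "0 \<le> t" "t \<le> pi"
  shows "-1 \<le> fexp t \<and> fexp t \<le> 1"
proof -
  have s: "0 \<le> sin t" "sin t \<le> t" using sin_ge_zero sin_x_le_x assms by auto
  have "(pi - t) * cos t \<le> pi - t" using assms by (simp add: mult_left_le)
  moreover have "-(pi - t) \<le> (pi - t) * cos t"
    using assms mult_left_mono[of "-1" "cos t" "pi - t"] by simp
  ultimately have "-pi \<le> (pi - t) * cos t + sin t \<and> (pi - t) * cos t + sin t \<le> pi"
    using s assms by linarith
  then show ?thesis unfolding fexp_def using pi_gt_zero by (auto simp: divide_le_eq le_divide_eq divide_less_eq less_divide_eq)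
qed

lemma fexp_strict:
  assumes "0 < t" "t < pi"
  shows "-1 < fexp t \<and> fexp t < 1"
proof -
  have s: "0 \<le> sin t" "sin t \<le> t" using sin_ge_zero sin_x_le_x assms by auto
  have c: "cos t < 1" using cos_mono_less_eq[of t 0] assms by simp
  have "(pi - t) * cos t < pi - t" using assms c by simp
  moreover have "-(pi - t) \<le> (pi - t) * cos t"
    using assms mult_left_mono[of "-1" "cos t" "pi - t"] by simp
  ultimately have "-pi < (pi - t) * cos t + sin t \<and> (pi - t) * cos t + sin t < pi"
    using s assms by linarith
  then show ?thesis unfolding fexp_def using pi_gt_zero by (auto simp: divide_le_eq le_divide_eq divide_less_eq less_divide_eq)
qed

lemma gmap_range:
  assumes "0 \<le> t" "t \<le> pi"
  shows "0 \<le> gmap t \<and> gmap t \<le> pi"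
  using fexp_bounds[OF assms] arccos_bounded unfolding gmap_fexp by blast

lemma fexp_deriv: "DERIV fexp t :> (- (pi - t) * sin t / pi)"
  unfolding fexp_def[abs_def]
  apply (rule derivative_eq_intros refl)+
  using pi_gt_zero apply (auto simp: field_simps)
  done

lemma gmap_deriv:
  assumes "0 < t" "t < pi"
  shows "DERIV gmap t :> inverse (- sqrt (1 - (fexp t)\<^sup>2)) * (- (pi - t) * sin t / pi)"
proof -
  have "DERIV (\<lambda>t. arccos (fexp t)) t :> inverse (- sqrt (1 - (fexp t)\<^sup>2)) * (- (pi - t) * sin t / pi)"
    using DERIV_chain2[OF DERIV_arccos fexp_deriv] fexp_strict[OF assms] by blast
  then show ?thesis unfolding gmap_fexp[abs_def] .
qed

lemma gmap_deriv_bound: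
  assumes "0 < t" "t < pi"
  shows "\<bar>inverse (- sqrt (1 - (fexp t)\<^sup>2)) * (- (pi - t) * sin t / pi)\<bar> \<le> 1"
proof -
  define F where "F = fexp t"
  define w where "w = (pi - t) * cos t + sin t"
  have Fw: "F = w / pi" unfolding F_def w_def fexp_def ..
  have fs: "-1 < F" "F < 1" using fexp_strict[OF assms] F_def by auto
  have pos: "0 < 1 - F\<^sup>2"
  proof -
    have "\<bar>F\<bar> < 1" using fs by linarith
    then have "F\<^sup>2 < 1" by (simp add: abs_square_less_1)
    then show ?thesis by simp
  qed
  define S where "S = sqrt (1 - F\<^sup>2)"
  have sq: "0 < S" using pos S_def by simp
  have S2: "S^2 = 1 - F\<^sup>2" using pos S_def by simp
  have sn: "0 \<le> sin t" using sin_ge_zero assms by auto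
  have pt: "0 < pi - t" using assms by simp
  have "((pi - t) * sin t)^2 \<le> (pi * S)^2"
  proof -
    have "(pi * S)^2 = pi^2 * (1 - F\<^sup>2)" by (simp add: power_mult_distrib S2)
    also have "\<dots> = pi^2 - w^2" using Fw by (simp add: power_divide right_diff_distrib)
    finally have 1: "(pi * S)^2 = pi^2 - w^2" .
    have 2: "((pi - t) * sin t)^2 + w^2
        = (pi-t)^2 + 2*(pi-t) * sin t * cos t + (sin t)^2"
    proof -
      have "((pi - t) * sin t)^2 + w^2 = (pi-t)^2 * ((sin t)^2 + (cos t)^2) + 2*(pi-t) * sin t * cos t + (sin t)^2"
        unfolding w_def power2_eq_square by algebra
      then show ?thesis using sin_cos_squared_add[of t] by simp
    qed
    show ?thesis using 1 2 psi_le[of t] assms by linarith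
  qed
  moreover have "0 \<le> pi * S" using sq by simp
  ultimately have le: "(pi - t) * sin t \<le> pi * S"
    by (rule power2_le_imp_le)
  have "\<bar>inverse (- S) * (- (pi - t) * sin t / pi)\<bar> = ((pi - t) * sin t) / (pi * S)"
  proof -
    have "inverse (- S) * (- (pi - t) * sin t / pi) = ((pi - t) * sin t) / (pi * S)"
      using sq by (simp add: field_simps)
    moreover have "0 \<le> ((pi - t) * sin t) / (pi * S)" using sq sn pt by simp
    ultimately show ?thesis by (metis abs_of_nonneg)
  qed
  moreover have "((pi - t) * sin t) / (pi * S) \<le> 1" using le sq by simp
  ultimately show ?thesis unfolding S_def F_def by simp
qed

lemma gmap_lip:
  assumes "0 \<le> a" "a \<le> pi" "0 \<le> b" "b \<le> pi"
  shows "\<bar>gmap a - gmap b\<bar> \<le> \<bar>a - b\<bar>"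
proof -
  have main: "\<bar>gmap v - gmap u\<bar> \<le> v - u" if "0 \<le> u" "u < v" "v \<le> pi" for u v
  proof -
    have fc: "continuous_on {u..v} fexp"
      unfolding fexp_def[abs_def] by (intro continuous_intros) auto
    have cont: "continuous_on {u..v} gmap"
      unfolding gmap_fexp[abs_def]
      by (rule continuous_on_arccos[OF fc]) (use fexp_bounds that in auto)
    have "gmap differentiable (at x)" if "u < x" "x < v" for x
    proof -
      have "0 < x" "x < pi" using that \<open>0 \<le> u\<close> \<open>v \<le> pi\<close> by linarith+
      from gmap_deriv[OF this] show ?thesis unfolding real_differentiable_def by blast
    qed
    from MVT[OF that(2) cont this] obtain l z where
      z: "u < z" "z < v" "DERIV gmap z :> l" "gmap v - gmap u = (v - u) * l" by blast
    have zz: "0 < z" "z < pi" using z that by linarith+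
    have "l = inverse (- sqrt (1 - (fexp z)\<^sup>2)) * (- (pi - z) * sin z / pi)"
      using DERIV_unique[OF z(3) gmap_deriv[OF zz]] .
    then have "\<bar>l\<bar> \<le> 1" using gmap_deriv_bound[OF zz] by simp
    then have "\<bar>(v - u) * l\<bar> \<le> v - u" using that by (simp add: abs_mult mult_left_le)
    then show ?thesis using z by simp
  qed
  show ?thesis
  proof (cases a b rule: linorder_cases)
    case less then show ?thesis using main[of a b] assms by (simp add: abs_minus_commute)
  next
    case greater then show ?thesis using main[of b a] assms by simp
  qed simp
qed


lemma sin_ge_lin:
  assumes "0 \<le> t" "t \<le> pi/2"
  shows "t / pi \<le> sin t"
proof -
  have m: "\<bar>sin t - (\<Sum>m<3. sin_coeff m * t ^ m)\<bar> \<le> inverse (fact 3) * \<bar>t\<bar> ^ 3"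
    by (rule Maclaurin_sin_bound)
  have e1: "(\<Sum>m<3. sin_coeff m * t ^ m) = t"
    by (simp add: sin_coeff_def numeral_3_eq_3)
  have e2: "inverse (fact 3) * \<bar>t\<bar> ^ 3 = t^3/6" using assms by (simp add: fact_numeral)
  have "\<bar>sin t - t\<bar> \<le> t^3/6" using m unfolding e1 e2 .
  then have "t - t^3/6 \<le> sin t" by linarith
  moreover have "t / pi \<le> t - t^3/6"
  proof -
    have p: "3 < pi" "pi < (16/5)" using pi_gt3 pi_less_4 pi_approx by auto
    have "t^2 \<le> (pi/2)^2" using assms by (intro power_mono) auto
    also have "\<dots> \<le> (64/25)"
    proof -
      have "pi * pi < (16/5) * (16/5)" using p by (intro mult_strict_mono) auto
      then show ?thesis by (simp add: power2_eq_square power_divide)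
    qed
    finally have t2: "t^2 \<le> (64/25)" .
    have "1/pi \<le> 1 - t^2/6"
    proof -
      have "1/pi \<le> 1/3" using p by (simp add: divide_le_eq)
      then show ?thesis using t2 by linarith
    qed
    then have "t * (1/pi) \<le> t * (1 - t^2/6)" using assms by (intro mult_left_mono) auto
    then show ?thesis by (simp add: algebra_simps power3_eq_cube power2_eq_square)
  qed
  ultimately show ?thesis by linarith
qed


lemma unit_angle_bound:
  fixes u v e :: "'a::real_inner"
  assumes nu: "norm u = 1" and nv: "norm v = 1" and ne: "norm e = 1"
  shows "\<bar>arccos (u \<bullet> e) - arccos (v \<bullet> e)\<bar> \<le> pi * norm (u - v)"
proof -
  define a where "a = u \<bullet> e"
  define b where "b = v \<bullet> e"
  have ab: "\<bar>a\<bar> \<le> 1" "\<bar>b\<bar> \<le> 1"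
    using Cauchy_Schwarz_ineq2[of u e] Cauchy_Schwarz_ineq2[of v e] nu nv ne a_def b_def by auto
  have ee: "e \<bullet> e = 1" using ne by (simp add: dot_square_norm)
  have uu: "u \<bullet> u = 1" using nu by (simp add: dot_square_norm)
  have vv: "v \<bullet> v = 1" using nv by (simp add: dot_square_norm)
  define u' where "u' = u - a *\<^sub>R e"
  define v' where "v' = v - b *\<^sub>R e"
  have i1: "u' \<bullet> v' = u \<bullet> v - a * b"
    unfolding u'_def v'_def using ee a_def b_def
    by (simp add: inner_diff_left inner_diff_right inner_commute algebra_simps)
  have i2: "norm u' = sqrt (1 - a\<^sup>2)"
  proof -
    have "u' \<bullet> u' = 1 - a\<^sup>2" unfolding u'_def using ee uu a_def
      by (simp add: inner_diff_left inner_diff_right inner_commute algebra_simps power2_eq_square)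
    then show ?thesis by (simp add: norm_eq_sqrt_inner)
  qed
  have i3: "norm v' = sqrt (1 - b\<^sup>2)"
  proof -
    have "v' \<bullet> v' = 1 - b\<^sup>2" unfolding v'_def using ee vv b_def
      by (simp add: inner_diff_left inner_diff_right inner_commute algebra_simps power2_eq_square)
    then show ?thesis by (simp add: norm_eq_sqrt_inner)
  qed
  have "u' \<bullet> v' \<le> norm u' * norm v'" by (rule norm_cauchy_schwarz)
  then have "u \<bullet> v - a * b \<le> sqrt (1 - a\<^sup>2) * sqrt (1 - b\<^sup>2)" unfolding i1 i2 i3 .
  then have key: "u \<bullet> v \<le> a * b + sqrt (1 - a\<^sup>2) * sqrt (1 - b\<^sup>2)" by linarith
  define \<alpha> where "\<alpha> = arccos a"
  define \<beta> where "\<beta> = arccos b"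
  have ra: "0 \<le> \<alpha>" "\<alpha> \<le> pi" "0 \<le> \<beta>" "\<beta> \<le> pi"
    using arccos_bounded ab \<alpha>_def \<beta>_def by (auto simp: abs_le_iff)
  have "cos (\<alpha> - \<beta>) = a * b + sqrt (1 - a\<^sup>2) * sqrt (1 - b\<^sup>2)"
    unfolding cos_diff \<alpha>_def \<beta>_def using ab by (simp add: cos_arccos_abs sin_arccos_abs)
  define \<gamma> where "\<gamma> = \<bar>\<alpha> - \<beta>\<bar>"
  have g: "0 \<le> \<gamma>" "\<gamma> \<le> pi" using ra \<gamma>_def by auto
  have cg: "u \<bullet> v \<le> cos \<gamma>" using key \<open>cos (\<alpha> - \<beta>) = _\<close> \<gamma>_def by simp
  have n2: "(norm (u - v))\<^sup>2 = 2 - 2 * (u \<bullet> v)"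
    unfolding power2_norm_eq_inner inner_diff_left inner_diff_right uu vv inner_commute[of v u]
    by simp
  have "cos \<gamma> = 1 - 2 * (sin (\<gamma>/2))\<^sup>2" using cos_double_sin[of "\<gamma>/2"] by simp
  then have "(2 * sin (\<gamma>/2))\<^sup>2 \<le> (norm (u - v))\<^sup>2" using n2 cg
    by (simp add: power_mult_distrib)
  then have s1: "2 * sin (\<gamma>/2) \<le> norm (u - v)"
    by (rule power2_le_imp_le) simp
  have "(\<gamma>/2) / pi \<le> sin (\<gamma>/2)" using g by (intro sin_ge_lin) auto
  then have "\<gamma> / pi \<le> norm (u - v)" using s1 by simp
  then have "\<gamma> \<le> pi * norm (u - v)" using pi_gt_zero by (simp add: divide_le_eq mult.commute)
  then show ?thesis unfolding \<gamma>_def \<alpha>_def \<beta>_def a_def b_def .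
qed

lemma angle_bound:
  fixes x y s :: "'a::real_inner"
  assumes "x \<noteq> 0" "y \<noteq> 0" "s \<noteq> 0"
  shows "\<bar>vec_angle x s - vec_angle y s\<bar> \<le> pi * norm (sgn x - sgn y)"
proof -
  have ee: "\<And>z. z \<noteq> 0 \<Longrightarrow> (z \<bullet> s) / (norm z * norm s) = sgn z \<bullet> sgn s"
    by (simp add: sgn_div_norm field_simps)
  show ?thesis unfolding vec_angle_def ee[OF assms(1)] ee[OF assms(2)]
    by (rule unit_angle_bound) (simp_all add: norm_sgn assms)
qed

lemma sgn_diff_bound:
  fixes x y :: "'a::real_inner"
  assumes "x \<noteq> 0" "y \<noteq> 0"
  shows "norm (sgn x - sgn y) \<le> norm (x - y) * max (1 / norm x) (1 / norm y)"
proof -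
  have main: "norm x * norm (sgn x - sgn y) \<le> norm (x - y)"
    if xy: "x \<noteq> 0" "y \<noteq> 0" "norm x \<le> norm y" for x y :: 'a
  proof -
    define a where "a = norm x"
    define b where "b = norm y"
    define w where "w = sgn y"
    have a0: "0 < a" using xy a_def by simp
    have yb: "y = b *\<^sub>R w" unfolding b_def w_def using xy by (simp add: sgn_div_norm)
    have ww: "w \<bullet> w = 1" using xy w_def by (simp add: dot_square_norm norm_sgn)
    have xw: "x \<bullet> w \<le> a" using norm_cauchy_schwarz[of x w] xy w_def a_def by (simp add: norm_sgn)
    have e1: "norm x * norm (sgn x - sgn y) = norm (x - a *\<^sub>R w)"
    proof -
      have "x - a *\<^sub>R w = a *\<^sub>R (sgn x - sgn y)" using a0 unfolding a_def w_def
        by (simp add: sgn_div_norm algebra_simps)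
      then show ?thesis using a0 a_def by simp
    qed
    have "(norm (x - a *\<^sub>R w))\<^sup>2 \<le> (norm (x - y))\<^sup>2"
    proof -
      have "(norm (x - y))\<^sup>2 - (norm (x - a *\<^sub>R w))\<^sup>2 = b\<^sup>2 - a\<^sup>2 - 2 * ((b - a) * (x \<bullet> w))"
      proof -
        have n: "(norm (x - c *\<^sub>R w))\<^sup>2 = x \<bullet> x - 2 * c * (x \<bullet> w) + c\<^sup>2" for c
          unfolding power2_norm_eq_inner inner_diff_left inner_diff_right inner_scaleR_left inner_scaleR_right ww inner_commute[of w x]
          by (simp add: power2_eq_square algebra_simps)
        show ?thesis unfolding yb n by (simp add: algebra_simps)
      qed
      moreover have "(b - a) * (x \<bullet> w) \<le> (b - a) * a"
        using xw xy a_def b_def by (intro mult_left_mono) auto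
      moreover have "b\<^sup>2 - a\<^sup>2 - 2 * ((b - a) * a) = (b - a)\<^sup>2" by (simp add: power2_eq_square algebra_simps)
      ultimately show ?thesis using zero_le_power2[of "b - a"] by linarith
    qed
    then have "norm (x - a *\<^sub>R w) \<le> norm (x - y)"
      by (rule power2_le_imp_le) simp
    then show ?thesis using e1 by simp
  qed
  have m1: "norm (x - y) / norm x \<le> norm (x - y) * max (1 / norm x) (1 / norm y)"
    by (simp add: divide_inverse mult_left_mono)
  have m2: "norm (x - y) / norm y \<le> norm (x - y) * max (1 / norm x) (1 / norm y)"
    by (simp add: divide_inverse mult_left_mono)
  have px: "0 < norm x" "0 < norm y" using assms by auto
  show ?thesis
  proof (cases "norm x \<le> norm y")
    case True
    have "norm x * norm (sgn x - sgn y) \<le> norm (x - y)" by (rule main[OF assms True])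
    then have "norm (sgn x - sgn y) \<le> norm (x - y) / norm x"
      using px by (subst pos_le_divide_eq) (auto simp: mult.commute)
    then show ?thesis using m1 by linarith
  next
    case False
    then have "norm y \<le> norm x" by simp
    from main[OF assms(2,1) this]
    have "norm y * norm (sgn x - sgn y) \<le> norm (x - y)" by (simp add: norm_minus_commute)
    then have "norm (sgn x - sgn y) \<le> norm (x - y) / norm y"
      using px by (subst pos_le_divide_eq) (auto simp: mult.commute)
    then show ?thesis using m2 by linarith
  qed
qed


definition PP :: "(nat \<Rightarrow> real) \<Rightarrow> nat set \<Rightarrow> real" where
  "PP t I = (\<Prod>j\<in>I. (pi - t j) / pi)"

definition Aa :: "(nat \<Rightarrow> real) \<Rightarrow> nat \<Rightarrow> real" where
  "Aa t d = (pi - 2 * t d) / pi * PP t {0..<d}"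

definition Ss :: "(nat \<Rightarrow> real) \<Rightarrow> nat \<Rightarrow> real" where
  "Ss t d = (\<Sum>i=0..<d. (sin (t i) / pi) * PP t {Suc i..<d})"

definition Bb :: "(nat \<Rightarrow> real) \<Rightarrow> nat \<Rightarrow> real" where
  "Bb t d = 2 * sin (t d) / pi + ((pi - 2 * t d) / pi) * Ss t d"

lemma prod_diff_abs:
  fixes a b a' b' :: real
  shows "\<bar>a * b - a' * b'\<bar> \<le> \<bar>a - a'\<bar> * \<bar>b\<bar> + \<bar>a'\<bar> * \<bar>b - b'\<bar>"
proof -
  have "a * b - a' * b' = (a - a') * b + a' * (b - b')" by (simp add: algebra_simps)
  then show ?thesis by (metis abs_mult abs_triangle_ineq)
qed

lemma sin_lip: "\<bar>sin a - sin b\<bar> \<le> \<bar>a - b\<bar>" for a b :: real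
proof -
  have e: "\<bar>sin a - sin b\<bar> = 2 * \<bar>sin ((a - b) / 2)\<bar> * \<bar>cos ((a + b) / 2)\<bar>"
    by (simp add: sin_diff_sin abs_mult)
  have s: "\<bar>sin ((a - b) / 2)\<bar> \<le> \<bar>(a - b) / 2\<bar>" by (rule abs_sin_x_le_abs_x)
  have c: "2 * \<bar>sin ((a - b) / 2)\<bar> * \<bar>cos ((a + b) / 2)\<bar> \<le> 2 * \<bar>sin ((a - b) / 2)\<bar>"
    by (simp add: mult_left_le)
  show ?thesis using e s c by simp
qed

lemma sum_i: "(\<Sum>i=0..<d. real i) = real d * (real d - 1) / 2"
  by (induction d) (auto simp: field_simps)

lemma sum_rev: "(\<Sum>i=0..<d. real (d - Suc i)) = real d * (real d - 1) / 2"
proof -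
  have "(\<Sum>i=0..<d. real (d - Suc i)) = (\<Sum>i=0..<d. (real d - 1) - real i)"
    by (rule sum.cong) (auto simp: of_nat_diff)
  also have "\<dots> = real d * (real d - 1) - real d * (real d - 1) / 2"
    by (simp add: sum_subtractf sum_i)
  finally show ?thesis by simp
qed

lemma const_ineq:
  fixes d :: real
  assumes "0 \<le> d"
  shows "pi^2 * ((d + 2) + 2 + 2 * d / pi + d + d * (d - 1) / (2 * pi) + (d + 2) / pi)
         \<le> 2 * d ^ 2 + (10 * pi + 8) * d + 20 * pi"
proof -
  have p: "3 < pi" "pi < 16/5" using pi_gt3 pi_approx by auto
  have e: "pi^2 * ((d + 2) + 2 + 2 * d / pi + d + d * (d - 1) / (2 * pi) + (d + 2) / pi)
      = pi^2 * (2 * d + 4) + 2 * pi * d + pi * d * (d - 1) / 2 + pi * (d + 2)"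
    using pi_gt_zero by (simp add: field_simps power2_eq_square)
  have 1: "0 \<le> d^2 * (2 - pi/2)" using p by simp
  have 2: "0 \<le> d * (pi * (15/2 - 2 * pi) + 8)" using p assms by (intro mult_nonneg_nonneg) auto
  have 3: "0 \<le> pi * (18 - 4 * pi)" using p by (intro mult_nonneg_nonneg) auto
  have "2 * d ^ 2 + (10 * pi + 8) * d + 20 * pi
      - (pi^2 * (2 * d + 4) + 2 * pi * d + pi * d * (d - 1) / 2 + pi * (d + 2))
      = d^2 * (2 - pi/2) + d * (pi * (15/2 - 2 * pi) + 8) + pi * (18 - 4 * pi)"
    by (simp add: field_simps power2_eq_square)
  then show ?thesis using e 1 2 3 by linarith
qed

locale seqs =
  fixes t t' :: "nat \<Rightarrow> real" and \<delta> :: real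
  assumes rt: "\<And>i. 0 \<le> t i \<and> t i \<le> pi"
    and rt': "\<And>i. 0 \<le> t' i \<and> t' i \<le> pi"
    and dt: "\<And>i. \<bar>t i - t' i\<bar> \<le> \<delta>"
begin

lemma delta_nonneg: "0 \<le> \<delta>"
  using dt[of 0] by linarith

lemma fac_bounds: "0 \<le> (pi - t i) / pi" "(pi - t i) / pi \<le> 1"
  "0 \<le> (pi - t' i) / pi" "(pi - t' i) / pi \<le> 1"
  using rt[of i] rt'[of i] pi_gt_zero by auto

lemma fac_abs: "\<bar>(pi - t' i) / pi\<bar> \<le> 1"
  using fac_bounds(3,4)[of i] by linarith

lemma fac_diff: "\<bar>(pi - t i) / pi - (pi - t' i) / pi\<bar> \<le> \<delta> / pi"
proof -
  have "(pi - t i) / pi - (pi - t' i) / pi = (t' i - t i) / pi" by (simp add: diff_divide_distrib)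
  then show ?thesis using dt[of i] pi_gt_zero
    by (simp add: abs_minus_commute divide_right_mono)
qed

lemma PP_bounds: "0 \<le> PP t I" "PP t I \<le> 1" "0 \<le> PP t' I" "PP t' I \<le> 1"
  unfolding PP_def using fac_bounds
  by (auto intro!: prod_nonneg prod_le_1)

lemma PP_diff:
  assumes "finite I"
  shows "\<bar>PP t I - PP t' I\<bar> \<le> real (card I) * \<delta> / pi"
  using assms
proof (induction I rule: finite_induct)
  case empty then show ?case by (simp add: PP_def)
next
  case (insert i I)
  have e: "PP t (insert i I) = (pi - t i) / pi * PP t I"
       "PP t' (insert i I) = (pi - t' i) / pi * PP t' I"
    using insert by (simp_all add: PP_def)
  have "\<bar>PP t (insert i I) - PP t' (insert i I)\<bar>
      \<le> \<bar>(pi - t i) / pi - (pi - t' i) / pi\<bar> * \<bar>PP t I\<bar> + \<bar>(pi - t' i) / pi\<bar> * \<bar>PP t I - PP t' I\<bar>"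
    unfolding e by (rule prod_diff_abs)
  also have "\<dots> \<le> \<delta> / pi * 1 + 1 * (real (card I) * \<delta> / pi)"
    using fac_diff fac_abs PP_bounds insert.IH delta_nonneg pi_gt_zero
    by (intro add_mono mult_mono) auto
  finally show ?case using insert by (simp add: field_simps)
qed

lemma c_abs: "\<bar>(pi - 2 * t i) / pi\<bar> \<le> 1" "\<bar>(pi - 2 * t' i) / pi\<bar> \<le> 1"
  using rt[of i] rt'[of i] pi_gt_zero by (auto simp: abs_le_iff divide_le_eq le_divide_eq)

lemma c_diff: "\<bar>(pi - 2 * t i) / pi - (pi - 2 * t' i) / pi\<bar> \<le> 2 * \<delta> / pi"
proof -
  have "(pi - 2 * t i) / pi - (pi - 2 * t' i) / pi = 2 * (t' i - t i) / pi" by (simp add: diff_divide_distrib)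
  then show ?thesis using dt[of i] pi_gt_zero
    by (simp add: abs_minus_commute divide_right_mono abs_mult)
qed

lemma Aa_diff: "\<bar>Aa t d - Aa t' d\<bar> \<le> (real d + 2) * \<delta> / pi"
proof -
  have "\<bar>Aa t d - Aa t' d\<bar> \<le> \<bar>(pi - 2 * t d) / pi - (pi - 2 * t' d) / pi\<bar> * \<bar>PP t {0..<d}\<bar>
       + \<bar>(pi - 2 * t' d) / pi\<bar> * \<bar>PP t {0..<d} - PP t' {0..<d}\<bar>"
    unfolding Aa_def by (rule prod_diff_abs)
  also have "\<dots> \<le> 2 * \<delta> / pi * 1 + 1 * (real (card {0..<d}) * \<delta> / pi)"
    using c_diff c_abs PP_bounds PP_diff[of "{0..<d}"] delta_nonneg pi_gt_zero
    by (intro add_mono mult_mono) auto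
  finally show ?thesis by (simp add: field_simps)
qed

lemma Ss_term_abs: "\<bar>sin (t i) / pi * PP t I\<bar> \<le> 1 / pi"
proof -
  have "\<bar>sin (t i) / pi * PP t I\<bar> = \<bar>sin (t i)\<bar> / pi * \<bar>PP t I\<bar>" using pi_gt_zero by (simp add: abs_mult)
  also have "\<dots> \<le> 1 / pi * 1" using PP_bounds pi_gt_zero
    by (intro mult_mono divide_right_mono) auto
  finally show ?thesis by simp
qed

lemma Ss_abs: "\<bar>Ss t' d\<bar> \<le> real d / pi"
proof -
  interpret sw: seqs t' t \<delta> using rt rt' dt by unfold_locales (auto simp: abs_minus_commute)
  have "\<bar>Ss t' d\<bar> \<le> (\<Sum>i=0..<d. \<bar>sin (t' i) / pi * PP t' {Suc i..<d}\<bar>)"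
    unfolding Ss_def by (rule sum_abs)
  also have "\<dots> \<le> (\<Sum>i=0..<d. 1 / pi)" by (intro sum_mono sw.Ss_term_abs)
  finally show ?thesis by simp
qed

lemma Ss_diff: "\<bar>Ss t d - Ss t' d\<bar> \<le> real d * \<delta> / pi + (\<Sum>i=0..<d. real (d - Suc i)) * \<delta> / pi^2"
proof -
  have "\<bar>Ss t d - Ss t' d\<bar> = \<bar>\<Sum>i=0..<d. (sin (t i) / pi * PP t {Suc i..<d} - sin (t' i) / pi * PP t' {Suc i..<d})\<bar>"
    unfolding Ss_def by (simp add: sum_subtractf)
  also have "\<dots> \<le> (\<Sum>i=0..<d. \<bar>sin (t i) / pi * PP t {Suc i..<d} - sin (t' i) / pi * PP t' {Suc i..<d}\<bar>)"
    by (rule sum_abs)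
  also have "\<dots> \<le> (\<Sum>i=0..<d. \<delta> / pi + real (d - Suc i) * \<delta> / pi^2)"
  proof (rule sum_mono)
    fix i assume "i \<in> {0..<d}"
    have "\<bar>sin (t i) / pi * PP t {Suc i..<d} - sin (t' i) / pi * PP t' {Suc i..<d}\<bar>
        \<le> \<bar>sin (t i) / pi - sin (t' i) / pi\<bar> * \<bar>PP t {Suc i..<d}\<bar>
          + \<bar>sin (t' i) / pi\<bar> * \<bar>PP t {Suc i..<d} - PP t' {Suc i..<d}\<bar>"
      by (rule prod_diff_abs)
    also have "\<dots> \<le> \<delta> / pi * 1 + 1 / pi * (real (card {Suc i..<d}) * \<delta> / pi)"
    proof (intro add_mono mult_mono)
      show "\<bar>sin (t i) / pi - sin (t' i) / pi\<bar> \<le> \<delta> / pi"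
      proof -
        have "\<bar>sin (t i) / pi - sin (t' i) / pi\<bar> = \<bar>sin (t i) - sin (t' i)\<bar> / pi"
          using pi_gt_zero by (simp add: diff_divide_distrib[symmetric])
        also have "\<dots> \<le> \<delta> / pi" using sin_lip[of "t i" "t' i"] dt[of i] pi_gt_zero
          by (intro divide_right_mono) auto
        finally show ?thesis .
      qed
      show "\<bar>sin (t' i) / pi\<bar> \<le> 1 / pi" using pi_gt_zero by (simp add: divide_right_mono)
    qed (use PP_bounds PP_diff[of "{Suc i..<d}"] delta_nonneg pi_gt_zero in auto)
    also have "\<dots> = \<delta> / pi + real (d - Suc i) * \<delta> / pi^2" by (simp add: power2_eq_square)
    finally show "\<bar>sin (t i) / pi * PP t {Suc i..<d} - sin (t' i) / pi * PP t' {Suc i..<d}\<bar>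
        \<le> \<delta> / pi + real (d - Suc i) * \<delta> / pi^2" .
  qed
  also have "\<dots> = real d * \<delta> / pi + (\<Sum>i=0..<d. real (d - Suc i)) * \<delta> / pi^2"
    by (simp add: sum.distrib sum_divide_distrib[symmetric] sum_distrib_right)
  finally show ?thesis .
qed

lemma Bb_abs: "\<bar>Bb t' d\<bar> \<le> (2 + real d) / pi"
proof -
  have "\<bar>Bb t' d\<bar> \<le> \<bar>2 * sin (t' d) / pi\<bar> + \<bar>(pi - 2 * t' d) / pi\<bar> * \<bar>Ss t' d\<bar>"
    unfolding Bb_def by (metis abs_mult abs_triangle_ineq)
  also have "\<dots> \<le> 2 / pi + 1 * (real d / pi)"
  proof (intro add_mono mult_mono)
    have s: "2 * \<bar>sin (t' d)\<bar> \<le> 2" by simp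
    have "2 * \<bar>sin (t' d)\<bar> / pi \<le> 2 / pi" using divide_right_mono[OF s] pi_gt_zero by simp
    then show "\<bar>2 * sin (t' d) / pi\<bar> \<le> 2 / pi" using pi_gt_zero by (simp add: abs_mult)
  qed (use c_abs Ss_abs pi_gt_zero in auto)
  finally show ?thesis by (simp add: add_divide_distrib)
qed

lemma Bb_diff: "\<bar>Bb t d - Bb t' d\<bar> \<le> 2 * \<delta> / pi + 2 * \<delta> / pi * (real d / pi)
    + (real d * \<delta> / pi + real d * (real d - 1) / 2 * \<delta> / pi^2)"
proof -
  interpret sw: seqs t' t \<delta> using rt rt' dt by unfold_locales (auto simp: abs_minus_commute)
  have "Bb t d - Bb t' d = (2 * sin (t d) / pi - 2 * sin (t' d) / pi)
      + ((pi - 2 * t d) / pi * Ss t d - (pi - 2 * t' d) / pi * Ss t' d)"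
    unfolding Bb_def by simp
  then have "\<bar>Bb t d - Bb t' d\<bar> \<le> \<bar>2 * sin (t d) / pi - 2 * sin (t' d) / pi\<bar>
      + \<bar>(pi - 2 * t d) / pi * Ss t d - (pi - 2 * t' d) / pi * Ss t' d\<bar>"
    by (metis abs_triangle_ineq)
  also have "\<dots> \<le> 2 * \<delta> / pi + (\<bar>(pi - 2 * t d) / pi - (pi - 2 * t' d) / pi\<bar> * \<bar>Ss t d\<bar>
      + \<bar>(pi - 2 * t' d) / pi\<bar> * \<bar>Ss t d - Ss t' d\<bar>)"
  proof (intro add_mono prod_diff_abs)
    have e: "2 * sin (t d) / pi - 2 * sin (t' d) / pi = 2 * (sin (t d) - sin (t' d)) / pi"
      by (simp add: diff_divide_distrib right_diff_distrib)
    have "\<bar>2 * (sin (t d) - sin (t' d)) / pi\<bar> = 2 * \<bar>sin (t d) - sin (t' d)\<bar> / pi"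
      unfolding abs_divide abs_mult using pi_gt_zero by simp
    also have "\<dots> \<le> 2 * \<delta> / pi" using sin_lip[of "t d" "t' d"] dt[of d] pi_gt_zero
      by (intro divide_right_mono) auto
    finally show "\<bar>2 * sin (t d) / pi - 2 * sin (t' d) / pi\<bar> \<le> 2 * \<delta> / pi" unfolding e .
  qed
  also have "\<dots> \<le> 2 * \<delta> / pi + (2 * \<delta> / pi * (real d / pi)
      + 1 * (real d * \<delta> / pi + real d * (real d - 1) / 2 * \<delta> / pi^2))"
  proof -
    have f1: "\<bar>(pi - 2 * t d) / pi - (pi - 2 * t' d) / pi\<bar> * \<bar>Ss t d\<bar> \<le> 2 * \<delta> / pi * (real d / pi)"
      by (rule mult_mono[OF c_diff sw.Ss_abs]) (use delta_nonneg pi_gt_zero in auto)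
    have f2: "\<bar>(pi - 2 * t' d) / pi\<bar> * \<bar>Ss t d - Ss t' d\<bar> \<le> 1 * (real d * \<delta> / pi + real d * (real d - 1) / 2 * \<delta> / pi^2)"
      by (rule mult_mono[OF c_abs(2) Ss_diff[unfolded sum_rev]]) auto
    show ?thesis using f1 f2 by linarith
  qed
  finally show ?thesis by simp
qed

lemma total:
  assumes E: "0 \<le> E" and dE: "\<delta> \<le> pi * E"
  shows "\<bar>Aa t d - Aa t' d\<bar> + \<bar>Bb t d - Bb t' d\<bar> + \<bar>Bb t' d\<bar> * E
     \<le> (2 * real d ^ 2 + (10 * pi + 8) * real d + 20 * pi) / pi^2 * E"
proof -
  have pp: "0 < pi" using pi_gt_zero .
  have dn: "0 \<le> \<delta>" by (rule delta_nonneg)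
  have a: "\<bar>Aa t d - Aa t' d\<bar> \<le> (real d + 2) * E"
  proof -
    have "(real d + 2) * \<delta> / pi \<le> (real d + 2) * (pi * E) / pi"
      using dE pp by (intro divide_right_mono mult_left_mono) auto
    then show ?thesis using Aa_diff[of d] pp by simp
  qed
  define Q where "Q = (real d + 2) + 2 + 2 * real d / pi + real d + real d * (real d - 1) / (2 * pi) + (real d + 2) / pi"
  have b: "\<bar>Bb t d - Bb t' d\<bar> \<le> (2 + 2 * real d / pi + real d + real d * (real d - 1) / (2 * pi)) * E"
  proof -
    have "\<bar>Bb t d - Bb t' d\<bar> \<le> 2 * \<delta> / pi + 2 * \<delta> / pi * (real d / pi)
      + (real d * \<delta> / pi + real d * (real d - 1) / 2 * \<delta> / pi^2)" by (rule Bb_diff)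
    also have "\<dots> = (\<delta> / pi) * (2 + 2 * real d / pi + real d + real d * (real d - 1) / (2 * pi))"
      using pp by (simp add: field_simps power2_eq_square)
    also have "\<dots> \<le> E * (2 + 2 * real d / pi + real d + real d * (real d - 1) / (2 * pi))"
    proof (rule mult_right_mono)
      show "\<delta> / pi \<le> E" using dE pp by (simp add: divide_le_eq mult.commute)
      show "0 \<le> 2 + 2 * real d / pi + real d + real d * (real d - 1) / (2 * pi)"
      proof -
        have "0 \<le> real d * (real d - 1)" by (cases d) auto
        then show ?thesis using pp by simp
      qed
    qed
    finally show ?thesis by (simp only: mult.commute)
  qed
  have c: "\<bar>Bb t' d\<bar> * E \<le> (2 + real d) / pi * E"
    using Bb_abs E by (rule mult_right_mono)
  have "\<bar>Aa t d - Aa t' d\<bar> + \<bar>Bb t d - Bb t' d\<bar> + \<bar>Bb t' d\<bar> * E \<le> Q * E"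
  proof -
    have "Q * E = (real d + 2) * E + (2 + 2 * real d / pi + real d + real d * (real d - 1) / (2 * pi)) * E
        + (2 + real d) / pi * E" unfolding Q_def by (simp add: algebra_simps add_divide_distrib)
    then show ?thesis using a b c by linarith
  qed
  also have "\<dots> \<le> (2 * real d ^ 2 + (10 * pi + 8) * real d + 20 * pi) / pi^2 * E"
  proof (rule mult_right_mono[OF _ E])
    have "pi^2 * Q \<le> 2 * real d ^ 2 + (10 * pi + 8) * real d + 20 * pi"
      unfolding Q_def by (rule const_ineq) simp
    then show "Q \<le> (2 * real d ^ 2 + (10 * pi + 8) * real d + 20 * pi) / pi^2"
      using pp by (simp add: le_divide_eq mult.commute)
  qed
  finally show ?thesis .
qed

end

lemma theta_range:
  fixes xs x :: "'a::real_inner"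
  assumes "xs \<noteq> 0" "x \<noteq> 0"
  shows "0 \<le> theta_bar xs i x \<and> theta_bar xs i x \<le> pi"
proof (induction i)
  case 0
  have "\<bar>x \<bullet> xs\<bar> \<le> norm x * norm xs" by (rule Cauchy_Schwarz_ineq2)
  then have "\<bar>(x \<bullet> xs) / (norm x * norm xs)\<bar> \<le> 1"
    using assms by (simp add: abs_divide divide_le_eq)
  define c where "c = (x \<bullet> xs) / (norm x * norm xs)"
  have "\<bar>c\<bar> \<le> 1" using \<open>\<bar>(x \<bullet> xs) / (norm x * norm xs)\<bar> \<le> 1\<close> c_def by simp
  then have "-1 \<le> c" "c \<le> 1" by linarith+
  then show ?case unfolding theta_bar.simps vec_angle_def c_def[symmetric]
    using arccos_bounded by blast
next
  case (Suc i)
  then show ?case using gmap_range by simp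
qed

lemma theta_diff:
  fixes xs x y :: "'a::real_inner"
  assumes "xs \<noteq> 0" "x \<noteq> 0" "y \<noteq> 0"
  shows "\<bar>theta_bar xs i x - theta_bar xs i y\<bar> \<le> \<bar>theta_bar xs 0 x - theta_bar xs 0 y\<bar>"
proof (induction i)
  case 0 then show ?case by simp
next
  case (Suc i)
  have "\<bar>gmap (theta_bar xs i x) - gmap (theta_bar xs i y)\<bar> \<le> \<bar>theta_bar xs i x - theta_bar xs i y\<bar>"
    using theta_range[OF assms(1,2), of i] theta_range[OF assms(1,3), of i] by (intro gmap_lip) auto
  then show ?case using Suc by simp
qed

lemma h_vec_eq:
  fixes xs x :: "'a::real_inner"
  assumes "x \<noteq> 0"
  shows "h_vec xs d x = (- (norm xs / 2 ^ d * Aa (\<lambda>i. theta_bar xs i x) d)) *\<^sub>R sgn xs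
     + (1 / 2 ^ d) *\<^sub>R x - (norm xs / 2 ^ d * Bb (\<lambda>i. theta_bar xs i x) d) *\<^sub>R sgn x"
proof -
  have "((1 / 2 ^ d) * (norm x - norm xs * Bb (\<lambda>i. theta_bar xs i x) d)) *\<^sub>R sgn x
      = (1 / 2 ^ d) *\<^sub>R x - (norm xs / 2 ^ d * Bb (\<lambda>i. theta_bar xs i x) d) *\<^sub>R sgn x"
    using assms by (simp add: sgn_div_norm algebra_simps)
  moreover have "h_vec xs d x = (- (norm xs / 2 ^ d * Aa (\<lambda>i. theta_bar xs i x) d)) *\<^sub>R sgn xs
      + ((1 / 2 ^ d) * (norm x - norm xs * Bb (\<lambda>i. theta_bar xs i x) d)) *\<^sub>R sgn x"
    unfolding h_vec_def Aa_def Bb_def Ss_def PP_def by (simp add: mult.assoc)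
  ultimately show ?thesis by simp
qed

lemma vec_id:
  fixes e x y sx sy :: "'a::real_vector"
  shows "((- (m * A)) *\<^sub>R e + c *\<^sub>R x - (m * B) *\<^sub>R sx) - ((- (m * A')) *\<^sub>R e + c *\<^sub>R y - (m * B') *\<^sub>R sy)
    = (- (m * (A - A'))) *\<^sub>R e + c *\<^sub>R (x - y) - m *\<^sub>R ((B - B') *\<^sub>R sx + B' *\<^sub>R (sx - sy))"
  by (simp add: algebra_simps)

lemma norm3: "norm (a + b - c) \<le> norm a + norm b + norm (c::'a::real_normed_vector)"
proof -
  have "norm (a + b - c) \<le> norm (a + b) + norm c" by (rule norm_triangle_ineq4)
  moreover have "norm (a + b) \<le> norm a + norm b" by (rule norm_triangle_ineq)
  ultimately show ?thesis by linarith
qed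

theorem lemma4:
  fixes xs x y :: "real ^ 'k" and d :: nat
  assumes "xs \<noteq> 0" and "d > 0" and "x \<noteq> 0" and "y \<noteq> 0"
  shows "norm (h_vec xs d x - h_vec xs d y)
           \<le> ((2 * real d ^ 2 + (10 * pi + 8) * real d + 20 * pi) * norm xs
                 / (pi ^ 2 * 2 ^ d) * max (1 / norm x) (1 / norm y) + 1 / 2 ^ d)
             * norm (x - y)
       \<and> (\<forall>r>0. norm x > r * norm xs \<longrightarrow> norm y > r * norm xs \<longrightarrow>
           norm (h_vec xs d x - h_vec xs d y)
           \<le> ((2 * real d ^ 2 + (10 * pi + 8) * real d + 20 * pi)
                 / (r * pi ^ 2 * 2 ^ d) + 1 / 2 ^ d) * norm (x - y))"
proof -
  define tx where "tx = (\<lambda>i. theta_bar xs i x)"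
  define ty where "ty = (\<lambda>i. theta_bar xs i y)"
  define \<delta> where "\<delta> = \<bar>tx 0 - ty 0\<bar>"
  define E where "E = norm (sgn x - sgn y)"
  define M where "M = max (1 / norm x) (1 / norm y)"
  define N where "N = norm (x - y)"
  define K where "K = 2 * real d ^ 2 + (10 * pi + 8) * real d + 20 * pi"
  define m where "m = norm xs / 2 ^ d"
  define A where "A = Aa tx d"
  define A' where "A' = Aa ty d"
  define B where "B = Bb tx d"
  define B' where "B' = Bb ty d"
  interpret seqs tx ty \<delta>
    unfolding tx_def ty_def \<delta>_def
    using theta_range[OF assms(1,3)] theta_range[OF assms(1,4)] theta_diff[OF assms(1,3,4)]
    by unfold_locales auto
  have E0: "0 \<le> E" unfolding E_def by simp
  have dE: "\<delta> \<le> pi * E"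
    unfolding \<delta>_def E_def tx_def ty_def theta_bar.simps
    using angle_bound[OF assms(3,4,1)] .
  have tot: "\<bar>A - A'\<bar> + \<bar>B - B'\<bar> + \<bar>B'\<bar> * E \<le> K / pi^2 * E"
    unfolding A_def A'_def B_def B'_def K_def by (rule total[OF E0 dE])
  have EN: "E \<le> N * M" unfolding E_def N_def M_def by (rule sgn_diff_bound[OF assms(3,4)])
  have K0: "0 \<le> K" unfolding K_def using pi_gt_zero by simp
  have m0: "0 \<le> m" unfolding m_def by simp
  have diff: "h_vec xs d x - h_vec xs d y = (- (m * (A - A'))) *\<^sub>R sgn xs + (1 / 2 ^ d) *\<^sub>R (x - y)
      - m *\<^sub>R ((B - B') *\<^sub>R sgn x + B' *\<^sub>R (sgn x - sgn y))"
    unfolding h_vec_eq[OF assms(3)] h_vec_eq[OF assms(4)] m_def A_def A'_def B_def B'_def tx_def ty_def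
    by (rule vec_id)
  have "norm (h_vec xs d x - h_vec xs d y)
      \<le> norm ((- (m * (A - A'))) *\<^sub>R sgn xs) + norm ((1 / 2 ^ d) *\<^sub>R (x - y))
        + norm (m *\<^sub>R ((B - B') *\<^sub>R sgn x + B' *\<^sub>R (sgn x - sgn y)))"
    unfolding diff by (rule norm3)
  also have "\<dots> \<le> m * \<bar>A - A'\<bar> + N / 2 ^ d + m * (\<bar>B - B'\<bar> + \<bar>B'\<bar> * E)"
  proof (intro add_mono)
    show "norm ((- (m * (A - A'))) *\<^sub>R sgn xs) \<le> m * \<bar>A - A'\<bar>"
      using assms(1) m0 by (simp add: norm_sgn abs_mult)
    show "norm ((1 / 2 ^ d) *\<^sub>R (x - y)) \<le> N / 2 ^ d" unfolding N_def by simp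
    have "norm ((B - B') *\<^sub>R sgn x + B' *\<^sub>R (sgn x - sgn y)) \<le> \<bar>B - B'\<bar> + \<bar>B'\<bar> * E"
      using norm_triangle_ineq[of "(B - B') *\<^sub>R sgn x" "B' *\<^sub>R (sgn x - sgn y)"] assms(3)
      unfolding E_def by (simp add: norm_sgn)
    then show "norm (m *\<^sub>R ((B - B') *\<^sub>R sgn x + B' *\<^sub>R (sgn x - sgn y))) \<le> m * (\<bar>B - B'\<bar> + \<bar>B'\<bar> * E)"
      using m0 by (simp add: mult_left_mono)
  qed
  also have "\<dots> = N / 2 ^ d + m * (\<bar>A - A'\<bar> + \<bar>B - B'\<bar> + \<bar>B'\<bar> * E)" by (simp add: algebra_simps)
  also have "\<dots> \<le> N / 2 ^ d + m * (K / pi^2 * (N * M))"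
  proof -
    have "K / pi^2 * E \<le> K / pi^2 * (N * M)" using EN K0 by (intro mult_left_mono) auto
    then have "\<bar>A - A'\<bar> + \<bar>B - B'\<bar> + \<bar>B'\<bar> * E \<le> K / pi^2 * (N * M)" using tot by linarith
    from mult_left_mono[OF this m0] show ?thesis by linarith
  qed
  also have "\<dots> = (K * norm xs / (pi ^ 2 * 2 ^ d) * M + 1 / 2 ^ d) * N"
    unfolding m_def by (simp add: field_simps)
  finally have main: "norm (h_vec xs d x - h_vec xs d y) \<le> (K * norm xs / (pi ^ 2 * 2 ^ d) * M + 1 / 2 ^ d) * N" .
  show ?thesis
  proof (intro conjI allI impI)
    show "norm (h_vec xs d x - h_vec xs d y)
           \<le> ((2 * real d ^ 2 + (10 * pi + 8) * real d + 20 * pi) * norm xs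
                 / (pi ^ 2 * 2 ^ d) * max (1 / norm x) (1 / norm y) + 1 / 2 ^ d)
             * norm (x - y)" using main unfolding K_def M_def N_def .
  next
    fix r :: real assume r: "r > 0" "norm x > r * norm xs" "norm y > r * norm xs"
    have nxs: "0 < norm xs" using assms(1) by simp
    have "norm xs * M \<le> 1 / r"
    proof -
      have "norm xs / norm x \<le> 1 / r" using r nxs by (simp add: divide_le_eq field_simps)
      moreover have "norm xs / norm y \<le> 1 / r" using r nxs by (simp add: divide_le_eq field_simps)
      ultimately show ?thesis unfolding M_def by (simp add: max_def)
    qed
    then have "K * norm xs / (pi ^ 2 * 2 ^ d) * M \<le> K / (r * pi ^ 2 * 2 ^ d)"
    proof -
      have "K * norm xs / (pi ^ 2 * 2 ^ d) * M = K / (pi ^ 2 * 2 ^ d) * (norm xs * M)" by simp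
      also have "\<dots> \<le> K / (pi ^ 2 * 2 ^ d) * (1 / r)"
        using \<open>norm xs * M \<le> 1 / r\<close> K0 by (intro mult_left_mono) auto
      also have "\<dots> = K / (r * pi ^ 2 * 2 ^ d)" by (simp add: field_simps)
      finally show ?thesis .
    qed
    then have "(K * norm xs / (pi ^ 2 * 2 ^ d) * M + 1 / 2 ^ d) * N \<le> (K / (r * pi ^ 2 * 2 ^ d) + 1 / 2 ^ d) * N"
      unfolding N_def by (intro mult_right_mono) auto
    then show "norm (h_vec xs d x - h_vec xs d y)
           \<le> ((2 * real d ^ 2 + (10 * pi + 8) * real d + 20 * pi)
                 / (r * pi ^ 2 * 2 ^ d) + 1 / 2 ^ d) * norm (x - y)"
      using main unfolding K_def N_def by linarith
  qed
qed

end
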